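(* For all integers $m,n\geq 1$, \[p^{ed}_{od}(m,2n)-p^{ed}_{od}(m,2n-1)=-D_o(m,2n-1).\]
   Context: $\mathcal{P}^{ed}_{od}$ is the set of integer partitions such that: - all parts are distinct; - every odd part is smaller than every even part; - at least one odd part appears. $p^{ed}_{od}(m,n)$ is the number of partitions of $n$ in $\mathcal{P}^{ed}_{od}$ with exactly $m$ parts. $D_o(m,n)$ is the number of partitions of $n$ into exactly $m$ distinct odd parts. *)

theory Defs
  imports Main
begin

text \<open>A partition into distinct parts is represented by its (finite) set of parts,
all positive, summing to n.\<close>

definition distinct_partitions :: "nat \<Rightarrow> nat set set" where
  "distinct_partitions n = {P. finite P \<and> (\<forall>x\<in>P. x > 0) \<and> \<Sum>P = n}"

definition P_ed_od :: "nat set \<Rightarrow> bool" where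
  "P_ed_od P \<longleftrightarrow> (\<forall>a\<in>P. \<forall>b\<in>P. odd a \<and> even b \<longrightarrow> a < b) \<and> (\<exists>a\<in>P. odd a)"

definition p_ed_od :: "nat \<Rightarrow> nat \<Rightarrow> nat" where
  "p_ed_od m n = card {P \<in> distinct_partitions n. P_ed_od P \<and> card P = m}"

definition D_o :: "nat \<Rightarrow> nat \<Rightarrow> nat" where
  "D_o m n = card {P \<in> distinct_partitions n. (\<forall>x\<in>P. odd x) \<and> card P = m}"

end

theory Submission
  imports Defs
begin

definition fwd :: "nat set \<Rightarrow> nat set" where
  "fwd P = insert (Min {x\<in>P. even x} + 1) (P - {Min {x\<in>P. even x}})"

definition bwd :: "nat set \<Rightarrow> nat set" where
  "bwd Q = insert (Max {x\<in>Q. odd x} - 1) (Q - {Max {x\<in>Q. odd x}})"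

lemma min_even:
  assumes "finite P" "x \<in> P" "even x"
  shows "Min {x\<in>P. even x} \<in> P \<and> even (Min {x\<in>P. even x}) \<and> (\<forall>y\<in>P. even y \<longrightarrow> Min {x\<in>P. even x} \<le> y)"
proof -
  have ne: "{x\<in>P. even x} \<noteq> {}" using assms by auto
  have f: "finite {x\<in>P. even x}" using assms by auto
  have "Min {x\<in>P. even x} \<in> {x\<in>P. even x}" using Min_in[OF f ne] .
  moreover have "\<forall>y\<in>P. even y \<longrightarrow> Min {x\<in>P. even x} \<le> y" using Min_le[OF f] by auto
  ultimately show ?thesis by auto
qed

lemma max_odd:
  assumes "finite P" "x \<in> P" "odd x"
  shows "Max {x\<in>P. odd x} \<in> P \<and> odd (Max {x\<in>P. odd x}) \<and> (\<forall>y\<in>P. odd y \<longrightarrow> y \<le> Max {x\<in>P. odd x})"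
proof -
  have ne: "{x\<in>P. odd x} \<noteq> {}" using assms by auto
  have f: "finite {x\<in>P. odd x}" using assms by auto
  have "Max {x\<in>P. odd x} \<in> {x\<in>P. odd x}" using Max_in[OF f ne] .
  moreover have "\<forall>y\<in>P. odd y \<longrightarrow> y \<le> Max {x\<in>P. odd x}" using Max_ge[OF f] by auto
  ultimately show ?thesis by auto
qed

lemma sum_evens: "finite P \<Longrightarrow> \<forall>x\<in>P. even x \<Longrightarrow> even (\<Sum>P :: nat)"
  by (simp add: dvd_sum)

lemma fwd_good:
  assumes P: "P \<in> distinct_partitions N" "P_ed_od P" "card P = m" and x: "x \<in> P" "even x"
  shows "fwd P \<in> distinct_partitions (Suc N) \<and> P_ed_od (fwd P) \<and> card (fwd P) = m
     \<and> bwd (fwd P) = P"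
proof -
  define e where "e = Min {x\<in>P. even x}"
  have fin: "finite P" and pos: "\<forall>x\<in>P. x > 0" and s: "\<Sum>P = N" using P(1) by (auto simp: distinct_partitions_def)
  have ord: "\<forall>a\<in>P. \<forall>b\<in>P. odd a \<and> even b \<longrightarrow> a < b" using P(2) by (auto simp: P_ed_od_def)
  have eP: "e \<in> P" and ee: "even e" and emin: "\<forall>y\<in>P. even y \<longrightarrow> e \<le> y"
    using min_even[OF fin x] unfolding e_def by auto
  have nP: "e + 1 \<notin> P" using ord eP ee by fastforce
  have F: "fwd P = insert (e+1) (P - {e})" unfolding fwd_def e_def by simp
  have n2: "e + 1 \<notin> P - {e}" using nP by auto
  have sumF: "\<Sum>(fwd P) = Suc N"
  proof -
    have "\<Sum>(fwd P) = (e+1) + \<Sum>(P - {e})" using F n2 fin by simp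
    moreover have "\<Sum>P = e + \<Sum>(P - {e})" using fin eP by (simp add: sum.remove)
    ultimately show ?thesis using s by simp
  qed
  have cardF: "card (fwd P) = m" using F n2 fin eP P(3)
    by (simp add: card_Diff_singleton) (metis Suc_pred card_gt_0_iff empty_iff)
  have dp: "fwd P \<in> distinct_partitions (Suc N)" using F fin pos sumF
    by (auto simp: distinct_partitions_def)
  have ordF: "\<forall>a\<in>fwd P. \<forall>b\<in>fwd P. odd a \<and> even b \<longrightarrow> a < b"
  proof (intro ballI impI)
    fix a b assume a: "a \<in> fwd P" and b: "b \<in> fwd P" and ab: "odd a \<and> even b"
    have bP: "b \<in> P" "b \<noteq> e" using b ab F ee by auto
    have "e \<le> b" using emin bP ab by auto
    hence "e + 2 \<le> b" using bP ab ee by presburger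
    show "a < b"
    proof (cases "a = e + 1")
      case True then show ?thesis using \<open>e + 2 \<le> b\<close> by simp
    next
      case False then have "a \<in> P" using a F by auto
      then show ?thesis using ord bP ab by auto
    qed
  qed
  have oddF: "\<exists>a\<in>fwd P. odd a" using F ee by auto
  have bw: "bwd (fwd P) = P"
  proof -
    have mx: "Max {x\<in>fwd P. odd x} = e + 1"
    proof (rule Max_eqI)
      show "finite {x\<in>fwd P. odd x}" using F fin by auto
      show "e + 1 \<in> {x\<in>fwd P. odd x}" using F ee by auto
      fix y assume "y \<in> {x\<in>fwd P. odd x}"
      then have "y = e + 1 \<or> (y \<in> P \<and> odd y)" using F by auto
      then show "y \<le> e + 1" using ord eP ee by fastforce
    qed
    show ?thesis unfolding bwd_def mx using F nP eP by auto
  qed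
  show ?thesis using dp ordF oddF cardF bw by (simp add: P_ed_od_def)
qed

lemma bwd_good:
  assumes P: "Q \<in> distinct_partitions (Suc N)" "P_ed_od Q" "card Q = m" and ev: "even (Suc N)"
  shows "bwd Q \<in> distinct_partitions N \<and> P_ed_od (bwd Q) \<and> card (bwd Q) = m
     \<and> (\<exists>x\<in>bwd Q. even x) \<and> fwd (bwd Q) = Q"
proof -
  define q where "q = Max {x\<in>Q. odd x}"
  have fin: "finite Q" and pos: "\<forall>x\<in>Q. x > 0" and s: "\<Sum>Q = Suc N" using P(1) by (auto simp: distinct_partitions_def)
  have ord: "\<forall>a\<in>Q. \<forall>b\<in>Q. odd a \<and> even b \<longrightarrow> a < b" using P(2) by (auto simp: P_ed_od_def)
  obtain x where x: "x \<in> Q" "odd x" using P(2) by (auto simp: P_ed_od_def)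
  have oQ: "q \<in> Q" and oo: "odd q" and omax: "\<forall>y\<in>Q. odd y \<longrightarrow> y \<le> q"
    using max_odd[OF fin x] unfolding q_def by auto
  have sumQ: "\<Sum>Q = q + \<Sum>(Q - {q})" using fin oQ by (simp add: sum.remove)
  obtain a where a: "a \<in> Q" "a \<noteq> q" "odd a"
  proof -
    have "\<not> (\<forall>x\<in>Q - {q}. even x)"
    proof
      assume "\<forall>x\<in>Q - {q}. even x"
      then have "even (\<Sum>(Q - {q}))" using fin by (intro sum_evens) auto
      then show False using sumQ s ev oo by simp
    qed
    then show ?thesis using that by auto
  qed
  have ao: "a < q" using omax a by (metis le_neq_implies_less)
  have "a > 0" using pos a by auto
  hence o3: "q \<ge> 3" using ao a oo by presburger
  have nQ: "q - 1 \<notin> Q" using ord oQ oo o3 by fastforce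
  have B: "bwd Q = insert (q-1) (Q - {q})" unfolding bwd_def q_def by simp
  have n2: "q - 1 \<notin> Q - {q}" using nQ by auto
  have sumB: "\<Sum>(bwd Q) = N"
    using B n2 fin sumQ s o3 by simp
  have cardB: "card (bwd Q) = m" using B n2 fin oQ P(3)
    by (simp add: card_Diff_singleton) (metis Suc_pred card_gt_0_iff empty_iff)
  have dp: "bwd Q \<in> distinct_partitions N" using B fin pos sumB o3
    by (auto simp: distinct_partitions_def)
  have ordB: "\<forall>c\<in>bwd Q. \<forall>b\<in>bwd Q. odd c \<and> even b \<longrightarrow> c < b"
  proof (intro ballI impI)
    fix c b assume c: "c \<in> bwd Q" and b: "b \<in> bwd Q" and cb: "odd c \<and> even b"
    have "even (q - 1)" using oo o3 by simp
    hence "c \<noteq> q - 1" using cb by auto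
    hence cQ: "c \<in> Q" "c \<noteq> q" using c B by auto
    have "c \<le> q" using omax cQ cb by auto
    hence "c + 2 \<le> q" using cQ cb oo by presburger
    show "c < b"
    proof (cases "b = q - 1")
      case True then show ?thesis using \<open>c + 2 \<le> q\<close> by simp
    next
      case False then have "b \<in> Q" using b B by auto
      then show ?thesis using ord cQ cb by auto
    qed
  qed
  have oddB: "\<exists>a\<in>bwd Q. odd a" using B a by auto
  have evB: "\<exists>x\<in>bwd Q. even x" using B oo by auto
  have fw: "fwd (bwd Q) = Q"
  proof -
    have mn: "Min {x\<in>bwd Q. even x} = q - 1"
    proof (rule Min_eqI)
      show "finite {x\<in>bwd Q. even x}" using B fin by auto
      show "q - 1 \<in> {x\<in>bwd Q. even x}" using B oo by auto
      fix y assume "y \<in> {x\<in>bwd Q. even x}"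
      then have "y = q - 1 \<or> (y \<in> Q \<and> even y)" using B by auto
      then show "q - 1 \<le> y" using ord oQ oo by fastforce
    qed
    show ?thesis unfolding fwd_def mn using B nQ oQ o3 by auto
  qed
  show ?thesis using dp ordB oddB cardB evB fw by (simp add: P_ed_od_def)
qed

theorem mainTheorem6:
  fixes m n :: nat
  assumes "m \<ge> 1" and "n \<ge> 1"
  shows "int (p_ed_od m (2*n)) - int (p_ed_od m (2*n - 1)) = - int (D_o m (2*n - 1))"
proof -
  define N where "N = 2*n - 1"
  have SN: "Suc N = 2*n" using assms N_def by simp
  define A where "A = {P \<in> distinct_partitions N. P_ed_od P \<and> card P = m}"
  define B where "B = {P \<in> distinct_partitions (Suc N). P_ed_od P \<and> card P = m}"
  define C where "C = {P \<in> distinct_partitions N. (\<forall>x\<in>P. odd x) \<and> card P = m}"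
  have finA: "finite A"
  proof (rule finite_subset)
    show "A \<subseteq> Pow {0..N}"
    proof
      fix P assume "P \<in> A"
      then have f: "finite P" and s: "\<Sum>P = N" by (auto simp: A_def distinct_partitions_def)
      have "\<forall>x\<in>P. x \<le> N" using member_le_sum[OF _ _ f] s by (metis zero_le)
      then show "P \<in> Pow {0..N}" by auto
    qed
  qed auto
  have CA: "C \<subseteq> A"
  proof
    fix P assume "P \<in> C"
    then have P: "P \<in> distinct_partitions N" "\<forall>x\<in>P. odd x" "card P = m" by (auto simp: C_def)
    then have "P \<noteq> {}" using assms by auto
    then show "P \<in> A" using P by (auto simp: A_def P_ed_od_def)
  qed
  have AC: "A - C = {P \<in> A. \<exists>x\<in>P. even x}" by (auto simp: A_def C_def)
  have bij: "bij_betw fwd (A - C) B"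
  proof (rule bij_betw_byWitness[where f'=bwd])
    show "\<forall>a\<in>A - C. bwd (fwd a) = a" using fwd_good unfolding AC unfolding A_def by blast
    show "\<forall>a'\<in>B. fwd (bwd a') = a'"
    proof
      fix Q assume "Q \<in> B"
      then have "Q \<in> distinct_partitions (Suc N)" "P_ed_od Q" "card Q = m" by (auto simp: B_def)
      from bwd_good[OF this] SN show "fwd (bwd Q) = Q" by simp
    qed
    show "fwd ` (A - C) \<subseteq> B" using fwd_good unfolding AC unfolding A_def B_def by blast
    show "bwd ` B \<subseteq> A - C"
    proof
      fix R assume "R \<in> bwd ` B"
      then obtain Q where R: "R = bwd Q" and "Q \<in> B" by auto
      then have "Q \<in> distinct_partitions (Suc N)" "P_ed_od Q" "card Q = m" by (auto simp: B_def)
      from bwd_good[OF this] SN have "R \<in> {P \<in> A. \<exists>x\<in>P. even x}" unfolding R A_def by simp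
      then show "R \<in> A - C" using AC by simp
    qed
  qed
  have "card A = card C + card B"
    using card_Diff_subset[OF finite_subset[OF CA finA] CA] bij_betw_same_card[OF bij]
      card_mono[OF finA CA] by simp
  moreover have "p_ed_od m (2*n) = card B" "p_ed_od m (2*n - 1) = card A" "D_o m (2*n-1) = card C"
    proof -
      show "p_ed_od m (2*n) = card B" unfolding B_def p_ed_od_def SN ..
      show "p_ed_od m (2*n - 1) = card A" unfolding A_def p_ed_od_def N_def ..
      show "D_o m (2*n-1) = card C" unfolding C_def D_o_def N_def ..
    qed
  ultimately show ?thesis by simp
qed

end
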